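(* Consider the metric $g=2\,d\zeta\,d\bar\zeta-2\,du\,dv-2H\,du^2$ with $H=f(\zeta,u)+\overline{f(\zeta,u)}$, where $f$ is jointly smooth and holomorphic in $\zeta$, and assume $f_{,\zeta\zeta}\neq0$. Then: (a) the complex self-dual Weyl tensor $\mathbf{C}^\dagger$ is a nonzero constant multiple of $f_{,\zeta\zeta}\,(du\wedge d\zeta)\otimes(du\wedge d\zeta)$, and it is complex recurrent, $\nabla\mathbf{C}^\dagger=\mathbf{K}\otimes\mathbf{C}^\dagger$, with recurrence 1-form $$\mathbf{K}=d(\ln f_{,\zeta\zeta})=\frac{f_{,\zeta\zeta u}\,du+f_{,\zeta\zeta\zeta}\,d\zeta}{f_{,\zeta\zeta}};$$ (b) the Bel–Robinson tensor has the form $\mathbf{T}=\beta\,du\otimes du\otimes du\otimes du$ with $\beta$ a positive constant multiple of $|f_{,\zeta\zeta}|^2$; (c) $|\mathbf{K}|^2:=\overline{K}^aK_a=\left|f_{,\zeta\zeta\zeta}/f_{,\zeta\zeta}\right|^2$, and the following are equivalent: $|\mathbf{K}|^2=0$; $f_{,\zeta\zeta\zeta}=0$; $\mathbf{T}\wedge\mathbf{K}=0$.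
   Context: Here $u,v$ are real coordinates and $\zeta$ a complex coordinate; $\mathbf{C}^\dagger=\mathbf{C}-i\,{}^*\mathbf{C}$ with ${}^*C_{abcd}=\tfrac12\eta_{abef}C^{ef}{}_{cd}$, and $T_{abcd}=C_{aecf}C_b{}^e{}_d{}^f+{}^*C_{aecf}\,{}^*C_b{}^e{}_d{}^f$. For tensors $\mathbf{A}_{c_1\cdots c_k a_1\cdots a_j}$ and $\mathbf{B}_{b_1\cdots b_j}$, the operation $\wedge$ is $(\mathbf{A}\wedge\mathbf{B})_{c_1\cdots c_k a_1\cdots a_j b_1\cdots b_j}=\mathbf{A}_{c_1\cdots c_k a_1\cdots a_j}\mathbf{B}_{b_1\cdots b_j}-\mathbf{A}_{c_1\cdots c_k b_1\cdots b_j}\mathbf{B}_{a_1\cdots a_j}$ (for $\mathbf{T}\wedge\mathbf{K}$, $k=3$, $j=1$). The bar denotes complex conjugation. *)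

theory Defs
  imports "HOL-Complex_Analysis.Complex_Analysis"
begin

fun Ck_on :: "nat \<Rightarrow> ('a::real_normed_vector \<Rightarrow> 'b::real_normed_vector) \<Rightarrow> 'a set \<Rightarrow> bool" where
  "Ck_on 0 F S = continuous_on S F"
| "Ck_on (Suc k) F S = ((\<forall>x\<in>S. F differentiable (at x)) \<and>
      (\<forall>v. Ck_on k (\<lambda>x. frechet_derivative F (at x) v) S))"

definition smooth_on_set :: "('a::real_normed_vector \<Rightarrow> 'b::real_normed_vector) \<Rightarrow> 'a set \<Rightarrow> bool" where
  "smooth_on_set F S = (\<forall>k. Ck_on k F S)"

section \<open>Real coordinates (u,v,x,y), indices 0,1,2,3; zeta = x + i y\<close>

type_synonym pt = "real \<times> real \<times> real \<times> real"

definition zeta :: "pt \<Rightarrow> complex" where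
  "zeta p = (case p of (u,v,x,y) \<Rightarrow> Complex x y)"

definition shift :: "nat \<Rightarrow> real \<Rightarrow> pt \<Rightarrow> pt" where
  "shift a t p = (case p of (u,v,x,y) \<Rightarrow>
     (if a = 0 then (u+t,v,x,y) else if a = 1 then (u,v+t,x,y)
      else if a = 2 then (u,v,x+t,y) else if a = 3 then (u,v,x,y+t) else (u,v,x,y)))"

definition pd :: "nat \<Rightarrow> (pt \<Rightarrow> 'a::real_normed_vector) \<Rightarrow> pt \<Rightarrow> 'a" where
  "pd a F p = vector_derivative (\<lambda>t. F (shift a t p)) (at 0)"

definition lc :: "nat \<Rightarrow> nat \<Rightarrow> nat \<Rightarrow> nat \<Rightarrow> real" where
  "lc a b c d = (if a < 4 \<and> b < 4 \<and> c < 4 \<and> d < 4 then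
     of_int (sgn (int b - int a) * sgn (int c - int a) * sgn (int d - int a) *
             sgn (int c - int b) * sgn (int d - int b) * sgn (int d - int c)) else 0)"

definition det4 :: "(nat \<Rightarrow> nat \<Rightarrow> real) \<Rightarrow> real" where
  "det4 M = (\<Sum>a<4. \<Sum>b<4. \<Sum>c<4. \<Sum>d<4. lc a b c d * M 0 a * M 1 b * M 2 c * M 3 d)"

type_synonym metric = "nat \<Rightarrow> nat \<Rightarrow> pt \<Rightarrow> real"

definition ginv :: "metric \<Rightarrow> pt \<Rightarrow> nat \<Rightarrow> nat \<Rightarrow> real" where
  "ginv g p = (THE M. (\<forall>i j. (4 \<le> i \<or> 4 \<le> j) \<longrightarrow> M i j = 0) \<and>
       (\<forall>i<4. \<forall>k<4. (\<Sum>j<4. g i j p * M j k) = (if i = k then 1 else 0)))"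

definition Gamma :: "metric \<Rightarrow> nat \<Rightarrow> nat \<Rightarrow> nat \<Rightarrow> pt \<Rightarrow> real" where
  "Gamma g a b c p = 1/2 * (\<Sum>d<4. ginv g p a d *
      (pd b (g d c) p + pd c (g d b) p - pd d (g b c) p))"

definition RiemU :: "metric \<Rightarrow> nat \<Rightarrow> nat \<Rightarrow> nat \<Rightarrow> nat \<Rightarrow> pt \<Rightarrow> real" where
  "RiemU g a b c d p = pd c (Gamma g a d b) p - pd d (Gamma g a c b) p +
     (\<Sum>e<4. Gamma g a c e p * Gamma g e d b p - Gamma g a d e p * Gamma g e c b p)"

definition Riem :: "metric \<Rightarrow> nat \<Rightarrow> nat \<Rightarrow> nat \<Rightarrow> nat \<Rightarrow> pt \<Rightarrow> real" where
  "Riem g a b c d p = (\<Sum>e<4. g a e p * RiemU g e b c d p)"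

definition Ric :: "metric \<Rightarrow> nat \<Rightarrow> nat \<Rightarrow> pt \<Rightarrow> real" where
  "Ric g b d p = (\<Sum>a<4. RiemU g a b a d p)"

definition Scal :: "metric \<Rightarrow> pt \<Rightarrow> real" where
  "Scal g p = (\<Sum>b<4. \<Sum>d<4. ginv g p b d * Ric g b d p)"

definition Weyl :: "metric \<Rightarrow> nat \<Rightarrow> nat \<Rightarrow> nat \<Rightarrow> nat \<Rightarrow> pt \<Rightarrow> real" where
  "Weyl g a b c d p = Riem g a b c d p
     - 1/2 * (g a c p * Ric g b d p - g a d p * Ric g b c p - g b c p * Ric g a d p + g b d p * Ric g a c p)
     + Scal g p / 6 * (g a c p * g b d p - g a d p * g b c p)"

text \<open>Volume form eta, orientation: eta(d/du,d/dv,d/dx,d/dy) > 0.\<close>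
definition eta :: "metric \<Rightarrow> nat \<Rightarrow> nat \<Rightarrow> nat \<Rightarrow> nat \<Rightarrow> pt \<Rightarrow> real" where
  "eta g a b c d p = sqrt \<bar>det4 (\<lambda>i j. g i j p)\<bar> * lc a b c d"

definition raise12 :: "metric \<Rightarrow> (nat \<Rightarrow> nat \<Rightarrow> nat \<Rightarrow> nat \<Rightarrow> pt \<Rightarrow> real) \<Rightarrow> nat \<Rightarrow> nat \<Rightarrow> nat \<Rightarrow> nat \<Rightarrow> pt \<Rightarrow> real" where
  "raise12 g T e f c d p = (\<Sum>e'<4. \<Sum>f'<4. ginv g p e e' * ginv g p f f' * T e' f' c d p)"

definition raise24 :: "metric \<Rightarrow> (nat \<Rightarrow> nat \<Rightarrow> nat \<Rightarrow> nat \<Rightarrow> pt \<Rightarrow> real) \<Rightarrow> nat \<Rightarrow> nat \<Rightarrow> nat \<Rightarrow> nat \<Rightarrow> pt \<Rightarrow> real" where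
  "raise24 g T b e d f p = (\<Sum>e'<4. \<Sum>f'<4. ginv g p e e' * ginv g p f f' * T b e' d f' p)"

definition dualWeyl :: "metric \<Rightarrow> nat \<Rightarrow> nat \<Rightarrow> nat \<Rightarrow> nat \<Rightarrow> pt \<Rightarrow> real" where
  "dualWeyl g a b c d p = 1/2 * (\<Sum>e<4. \<Sum>f<4. eta g a b e f p * raise12 g (Weyl g) e f c d p)"

definition Cdag :: "metric \<Rightarrow> nat \<Rightarrow> nat \<Rightarrow> nat \<Rightarrow> nat \<Rightarrow> pt \<Rightarrow> complex" where
  "Cdag g a b c d p = complex_of_real (Weyl g a b c d p) - \<i> * complex_of_real (dualWeyl g a b c d p)"

text \<open>Covariant derivative of a complex (0,4)-tensor; derivative index first.\<close>
definition covD4 :: "metric \<Rightarrow> (nat \<Rightarrow> nat \<Rightarrow> nat \<Rightarrow> nat \<Rightarrow> pt \<Rightarrow> complex) \<Rightarrow> nat \<Rightarrow> nat \<Rightarrow> nat \<Rightarrow> nat \<Rightarrow> nat \<Rightarrow> pt \<Rightarrow> complex" where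
  "covD4 g T e a b c d p = pd e (T a b c d) p -
     (\<Sum>f<4. complex_of_real (Gamma g f e a p) * T f b c d p + complex_of_real (Gamma g f e b p) * T a f c d p
          + complex_of_real (Gamma g f e c p) * T a b f d p + complex_of_real (Gamma g f e d p) * T a b c f p)"

definition BelRobinson :: "metric \<Rightarrow> nat \<Rightarrow> nat \<Rightarrow> nat \<Rightarrow> nat \<Rightarrow> pt \<Rightarrow> real" where
  "BelRobinson g a b c d p = (\<Sum>e<4. \<Sum>f<4.
      Weyl g a e c f p * raise24 g (Weyl g) b e d f p + dualWeyl g a e c f p * raise24 g (dualWeyl g) b e d f p)"

definition wedgeTK :: "(nat \<Rightarrow> nat \<Rightarrow> nat \<Rightarrow> nat \<Rightarrow> pt \<Rightarrow> real) \<Rightarrow> (nat \<Rightarrow> pt \<Rightarrow> complex) \<Rightarrow> nat \<Rightarrow> nat \<Rightarrow> nat \<Rightarrow> nat \<Rightarrow> nat \<Rightarrow> pt \<Rightarrow> complex" where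
  "wedgeTK T K c1 c2 c3 a b p = complex_of_real (T c1 c2 c3 a p) * K b p - complex_of_real (T c1 c2 c3 b p) * K a p"

definition normK :: "metric \<Rightarrow> (nat \<Rightarrow> pt \<Rightarrow> complex) \<Rightarrow> pt \<Rightarrow> complex" where
  "normK g K p = (\<Sum>a<4. \<Sum>b<4. complex_of_real (ginv g p a b) * cnj (K a p) * K b p)"

definition du :: "nat \<Rightarrow> complex" where "du a = (if a = 0 then 1 else 0)"
definition duR :: "nat \<Rightarrow> real" where "duR a = (if a = 0 then 1 else 0)"
definition dzeta :: "nat \<Rightarrow> complex" where "dzeta a = (if a = 2 then 1 else if a = 3 then \<i> else 0)"
definition wedge1 :: "(nat \<Rightarrow> complex) \<Rightarrow> (nat \<Rightarrow> complex) \<Rightarrow> nat \<Rightarrow> nat \<Rightarrow> complex" where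
  "wedge1 A B a b = A a * B b - A b * B a"

definition Hfun :: "(complex \<Rightarrow> real \<Rightarrow> complex) \<Rightarrow> pt \<Rightarrow> real" where
  "Hfun f p = Re (f (zeta p) (fst p) + cnj (f (zeta p) (fst p)))"

definition pp_metric :: "(complex \<Rightarrow> real \<Rightarrow> complex) \<Rightarrow> metric" where
  "pp_metric f a b p = (if a = 0 \<and> b = 0 then - 2 * Hfun f p
     else if (a = 0 \<and> b = 1) \<or> (a = 1 \<and> b = 0) then -1
     else if (a = 2 \<and> b = 2) \<or> (a = 3 \<and> b = 3) then 2 else 0)"

definition fz :: "(complex \<Rightarrow> real \<Rightarrow> complex) \<Rightarrow> complex \<Rightarrow> real \<Rightarrow> complex" where
  "fz f z u = deriv (\<lambda>w. f w u) z"
definition fzz :: "(complex \<Rightarrow> real \<Rightarrow> complex) \<Rightarrow> complex \<Rightarrow> real \<Rightarrow> complex" where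
  "fzz f z u = deriv (\<lambda>w. fz f w u) z"
definition fzzz :: "(complex \<Rightarrow> real \<Rightarrow> complex) \<Rightarrow> complex \<Rightarrow> real \<Rightarrow> complex" where
  "fzzz f z u = deriv (\<lambda>w. fzz f w u) z"

definition Fzz :: "(complex \<Rightarrow> real \<Rightarrow> complex) \<Rightarrow> pt \<Rightarrow> complex" where
  "Fzz f p = fzz f (zeta p) (fst p)"
definition Fzzz :: "(complex \<Rightarrow> real \<Rightarrow> complex) \<Rightarrow> pt \<Rightarrow> complex" where
  "Fzzz f p = fzzz f (zeta p) (fst p)"

text \<open>Recurrence 1-form K = (f_{zz u} du + f_{zzz} dzeta) / f_{zz}; f_{zz u} = pd 0 (Fzz f).\<close>
definition Kform :: "(complex \<Rightarrow> real \<Rightarrow> complex) \<Rightarrow> nat \<Rightarrow> pt \<Rightarrow> complex" where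
  "Kform f e p = (pd 0 (Fzz f) p * du e + Fzzz f p * dzeta e) / Fzz f p"

end

theory Submission
  imports Defs
begin


definition Dv :: "('a::real_normed_vector \<Rightarrow> 'b::real_normed_vector) \<Rightarrow> 'a \<Rightarrow> 'a \<Rightarrow> 'b" where
  "Dv G v x = frechet_derivative G (at x) v"

lemma smooth_D: "smooth_on_set F S \<Longrightarrow> smooth_on_set (Dv F v) S"
  unfolding smooth_on_set_def Dv_def
proof
  fix k assume "\<forall>k. Ck_on k F S"
  then have "Ck_on (Suc k) F S" by blast
  then show "Ck_on k (\<lambda>x. frechet_derivative F (at x) v) S" by simp
qed

lemma smooth_diff: "smooth_on_set F S \<Longrightarrow> x \<in> S \<Longrightarrow> F differentiable (at x)"
  unfolding smooth_on_set_def by (metis Ck_on.simps(2))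

lemma smooth_has: "smooth_on_set F S \<Longrightarrow> x \<in> S \<Longrightarrow> (F has_derivative (\<lambda>h. Dv F h x)) (at x)"
  unfolding Dv_def using smooth_diff frechet_derivative_works by blast

lemma has_Dv: "G differentiable (at x) \<Longrightarrow> (G has_derivative (\<lambda>h. Dv G h x)) (at x)"
  unfolding Dv_def using frechet_derivative_works by blast

lemma Dv_lin: "G differentiable (at x) \<Longrightarrow> bounded_linear (\<lambda>h. Dv G h x)"
  using has_Dv has_derivative_bounded_linear by blast

lemma Dv_zero: "G differentiable (at x) \<Longrightarrow> Dv G 0 x = 0"
  using Dv_lin[of G x] linear_0 bounded_linear.linear by blast

lemma Dv_scale: "G differentiable (at x) \<Longrightarrow> Dv G (c *\<^sub>R v) x = c *\<^sub>R Dv G v x"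
  using Dv_lin[of G x] bounded_linear.linear linear_cmul by blast

lemma line_deriv:
  assumes "K differentiable (at (y + t *\<^sub>R w))"
  shows "((\<lambda>t. K (y + t *\<^sub>R w)) has_vector_derivative Dv K w (y + t *\<^sub>R w)) (at t)"
proof -
  have 1: "((\<lambda>t. y + t *\<^sub>R w) has_derivative (\<lambda>h. h *\<^sub>R w)) (at t)"
    by (auto intro!: derivative_eq_intros)
  have 2: "(K has_derivative (\<lambda>h. Dv K h (y + t *\<^sub>R w))) (at (y + t *\<^sub>R w))"
    using has_Dv[OF assms] .
  have "((\<lambda>t. K (y + t *\<^sub>R w)) has_derivative (\<lambda>h. Dv K (h *\<^sub>R w) (y + t *\<^sub>R w))) (at t)"
    using has_derivative_compose[OF 1 2] by (simp add: o_def)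
  moreover have "(\<lambda>h. Dv K (h *\<^sub>R w) (y + t *\<^sub>R w)) = (\<lambda>h. h *\<^sub>R Dv K w (y + t *\<^sub>R w))"
    using Dv_scale[OF assms] by auto
  ultimately show ?thesis unfolding has_vector_derivative_def by simp
qed

lemma mvi:
  fixes h :: "real \<Rightarrow> 'b::real_normed_vector"
  assumes "0 \<le> s" "\<And>t. t \<in> {0..s} \<Longrightarrow> (h has_vector_derivative h' t) (at t)"
    "\<And>t. t \<in> {0..s} \<Longrightarrow> norm (h' t) \<le> M"
  shows "norm (h s - h 0) \<le> M * s"
proof -
  have "norm (h s - h 0) \<le> M * norm (s - 0)"
  proof (rule differentiable_bound[of "{0..s}" h "\<lambda>t x. x *\<^sub>R h' t"])
    show "convex {0..s}" by simp
    fix x assume x: "x \<in> {0..s}"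
    show "(h has_derivative (\<lambda>xa. xa *\<^sub>R h' x)) (at x within {0..s})"
      using assms(2)[OF x] has_vector_derivative_def has_derivative_at_withinI by blast
    have "onorm (\<lambda>xa. xa *\<^sub>R h' x) = onorm (\<lambda>x::real. x) * norm (h' x)"
      by (rule onorm_scaleR_left) simp
    also have "\<dots> = norm (h' x)" by (simp add: onorm_id)
    finally show "onorm (\<lambda>xa. xa *\<^sub>R h' x) \<le> M" using assms(3)[OF x] by simp
  qed (use assms in auto)
  then show ?thesis using assms(1) by simp
qed

lemma vd_scale_lin: "((\<lambda>t::real. t *\<^sub>R A) has_vector_derivative A) (at t)"
  unfolding has_vector_derivative_def by (auto intro!: derivative_eq_intros)

lemma schwarz_claim:
  fixes G :: "'a::real_normed_vector \<Rightarrow> 'b::real_normed_vector"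
  assumes ball: "ball x \<delta> \<subseteq> S" and s: "0 < s" "s * (norm v + norm w) < \<delta>"
    and dG: "\<forall>y\<in>S. G differentiable (at y)" and dGv: "\<forall>y\<in>S. Dv G v differentiable (at y)"
    and bnd: "\<forall>y\<in>ball x \<delta>. norm (Dv (Dv G v) w y - A) \<le> \<epsilon>"
  shows "norm (G (x + s *\<^sub>R v + s *\<^sub>R w) - G (x + s *\<^sub>R v) - G (x + s *\<^sub>R w) + G x - (s * s) *\<^sub>R A) \<le> \<epsilon> * s * s"
proof -
  have inball: "x + r *\<^sub>R v + t *\<^sub>R w \<in> ball x \<delta>" if "r \<in> {0..s}" "t \<in> {0..s}" for r t
  proof -
    have "norm (r *\<^sub>R v + t *\<^sub>R w) \<le> norm (r *\<^sub>R v) + norm (t *\<^sub>R w)" by (rule norm_triangle_ineq)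
    also have "\<dots> = r * norm v + t * norm w" using that by simp
    also have "\<dots> \<le> s * norm v + s * norm w" using that by (auto intro!: add_mono mult_right_mono)
    finally have "norm (r *\<^sub>R v + t *\<^sub>R w) < \<delta>" using s by (simp add: algebra_simps)
    moreover have "norm (- (r *\<^sub>R v) - t *\<^sub>R w) = norm (r *\<^sub>R v + t *\<^sub>R w)"
    proof -
      have "- (r *\<^sub>R v) - t *\<^sub>R w = - (r *\<^sub>R v + t *\<^sub>R w)" by simp
      then show ?thesis by (simp only: norm_minus_cancel)
    qed
    ultimately show ?thesis by (simp add: dist_norm)
  qed
  have step1: "norm (Dv G v (x + r *\<^sub>R v + s *\<^sub>R w) - Dv G v (x + r *\<^sub>R v) - s *\<^sub>R A) \<le> \<epsilon> * s"
    if r: "r \<in> {0..s}" for r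
  proof -
    have "norm ((Dv G v ((x + r *\<^sub>R v) + s *\<^sub>R w) - s *\<^sub>R A) - (Dv G v ((x + r *\<^sub>R v) + 0 *\<^sub>R w) - 0 *\<^sub>R A)) \<le> \<epsilon> * s"
    proof (rule mvi[where h' = "\<lambda>t. Dv (Dv G v) w ((x + r *\<^sub>R v) + t *\<^sub>R w) - A"])
      show "0 \<le> s" using s by simp
      fix t assume t: "t \<in> {0..s}"
      have "(x + r *\<^sub>R v) + t *\<^sub>R w \<in> S" using inball[OF r t] ball by auto
      then show "((\<lambda>t. Dv G v ((x + r *\<^sub>R v) + t *\<^sub>R w) - t *\<^sub>R A) has_vector_derivative
          Dv (Dv G v) w ((x + r *\<^sub>R v) + t *\<^sub>R w) - A) (at t)"
        using dGv by (intro has_vector_derivative_diff line_deriv vd_scale_lin) auto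
      show "norm (Dv (Dv G v) w ((x + r *\<^sub>R v) + t *\<^sub>R w) - A) \<le> \<epsilon>"
        using bnd inball[OF r t] by auto
    qed
    then show ?thesis by (simp add: algebra_simps)
  qed
  have "norm ((G ((x + s *\<^sub>R w) + s *\<^sub>R v) - G (x + s *\<^sub>R v) - s *\<^sub>R (s *\<^sub>R A))
      - (G ((x + s *\<^sub>R w) + 0 *\<^sub>R v) - G (x + 0 *\<^sub>R v) - 0 *\<^sub>R (s *\<^sub>R A))) \<le> (\<epsilon> * s) * s"
  proof (rule mvi[where h' = "\<lambda>r. Dv G v ((x + s *\<^sub>R w) + r *\<^sub>R v) - Dv G v (x + r *\<^sub>R v) - s *\<^sub>R A"])
    show "0 \<le> s" using s by simp
    fix r assume r: "r \<in> {0..s}"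
    have s0: "s \<in> {0..s}" "0 \<in> {0..s}" using s by auto
    have "x + r *\<^sub>R v + s *\<^sub>R w \<in> S" using inball[OF r s0(1)] ball by blast
    then have m1: "(x + s *\<^sub>R w) + r *\<^sub>R v \<in> S" by (simp add: add_ac)
    have "x + r *\<^sub>R v + 0 *\<^sub>R w \<in> S" using inball[OF r s0(2)] ball by blast
    then have "x + r *\<^sub>R v \<in> S" by simp
    with m1 show "((\<lambda>r. G ((x + s *\<^sub>R w) + r *\<^sub>R v) - G (x + r *\<^sub>R v) - r *\<^sub>R (s *\<^sub>R A)) has_vector_derivative
        Dv G v ((x + s *\<^sub>R w) + r *\<^sub>R v) - Dv G v (x + r *\<^sub>R v) - s *\<^sub>R A) (at r)"
      using dG by (intro has_vector_derivative_diff line_deriv vd_scale_lin) (auto simp: add_ac)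
    show "norm (Dv G v ((x + s *\<^sub>R w) + r *\<^sub>R v) - Dv G v (x + r *\<^sub>R v) - s *\<^sub>R A) \<le> \<epsilon> * s"
      using step1[OF r] by (simp add: add_ac)
  qed
  then show ?thesis by (simp add: algebra_simps)
qed

lemma schwarz:
  fixes G :: "'a::real_normed_vector \<Rightarrow> 'b::real_normed_vector"
  assumes S: "open S" and sm: "smooth_on_set G S" and x: "x \<in> S"
  shows "Dv (Dv G v) w x = Dv (Dv G w) v x"
proof -
  define A where "A = Dv (Dv G v) w x"
  define B where "B = Dv (Dv G w) v x"
  have smA: "smooth_on_set (Dv (Dv G v) w) S" and smB: "smooth_on_set (Dv (Dv G w) v) S"
    using sm by (auto intro!: smooth_D)
  have cA: "continuous (at x) (Dv (Dv G v) w)" and cB: "continuous (at x) (Dv (Dv G w) v)"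
    using smA smB S x unfolding smooth_on_set_def
    by (metis Ck_on.simps(1) continuous_on_eq_continuous_at)+
  have dG: "\<forall>y\<in>S. G differentiable (at y)" using sm smooth_diff by blast
  have dGv: "\<forall>y\<in>S. Dv G v differentiable (at y)" "\<forall>y\<in>S. Dv G w differentiable (at y)"
    using sm smooth_diff smooth_D by blast+
  have le: "norm (A - B) \<le> 2 * \<epsilon>" if e: "\<epsilon> > 0" for \<epsilon>
  proof -
    obtain d1 where d1: "d1 > 0" "\<forall>y. dist y x < d1 \<longrightarrow> dist (Dv (Dv G v) w y) A < \<epsilon>"
      using cA e unfolding continuous_at_eps_delta A_def by blast
    obtain d2 where d2: "d2 > 0" "\<forall>y. dist y x < d2 \<longrightarrow> dist (Dv (Dv G w) v y) B < \<epsilon>"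
      using cB e unfolding continuous_at_eps_delta B_def by blast
    obtain d0 where d0: "d0 > 0" "ball x d0 \<subseteq> S" using S x openE by blast
    define \<delta> where "\<delta> = min d0 (min d1 d2)"
    have dpos: "\<delta> > 0" using d0 d1 d2 by (simp add: \<delta>_def)
    define s where "s = \<delta> / (2 * (norm v + norm w + 1))"
    have Kp: "2 * (norm v + norm w + 1) > 0" using norm_ge_zero[of v] norm_ge_zero[of w] by (simp only: zero_less_mult_iff) linarith
    then have spos: "s > 0" using dpos unfolding s_def by (intro divide_pos_pos)
    have "s * (norm v + norm w) \<le> s * (norm v + norm w + 1)" using spos by simp
    also have "\<dots> = \<delta> / 2" unfolding s_def using Kp by (simp add: field_simps)
    also have "\<dots> < \<delta>" using dpos by simp
    finally have sd: "s * (norm v + norm w) < \<delta>" .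
    have sd': "s * (norm w + norm v) < \<delta>" using sd by (simp add: add_ac)
    have ball: "ball x \<delta> \<subseteq> S" using d0 by (auto simp: \<delta>_def)
    have bA: "\<forall>y\<in>ball x \<delta>. norm (Dv (Dv G v) w y - A) \<le> \<epsilon>"
      using d1 by (auto simp: \<delta>_def dist_norm norm_minus_commute less_imp_le)
    have bB: "\<forall>y\<in>ball x \<delta>. norm (Dv (Dv G w) v y - B) \<le> \<epsilon>"
      using d2 by (auto simp: \<delta>_def dist_norm norm_minus_commute less_imp_le)
    define Q where "Q = G (x + s *\<^sub>R v + s *\<^sub>R w) - G (x + s *\<^sub>R v) - G (x + s *\<^sub>R w) + G x"
    have 1: "norm (Q - (s * s) *\<^sub>R A) \<le> \<epsilon> * s * s"
      using schwarz_claim[OF ball spos sd dG dGv(1) bA] by (simp add: Q_def)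
    have 2: "norm (Q - (s * s) *\<^sub>R B) \<le> \<epsilon> * s * s"
      using schwarz_claim[OF ball spos sd' dG dGv(2) bB] by (simp add: Q_def algebra_simps)
    have "norm ((s * s) *\<^sub>R (A - B)) = norm ((Q - (s * s) *\<^sub>R B) - (Q - (s * s) *\<^sub>R A))"
      by (simp add: algebra_simps)
    also have "\<dots> \<le> norm (Q - (s * s) *\<^sub>R B) + norm (Q - (s * s) *\<^sub>R A)" by (rule norm_triangle_ineq4)
    also have "\<dots> \<le> (2 * \<epsilon>) * (s * s)" using 1 2 by simp
    finally have "(s * s) * norm (A - B) \<le> (s * s) * (2 * \<epsilon>)" using spos by (simp add: mult.commute)
    then show ?thesis using spos by (simp add: mult_le_cancel_left)
  qed
  have "norm (A - B) = 0"
  proof (rule ccontr)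
    assume "norm (A - B) \<noteq> 0"
    then have p: "norm (A - B) > 0" by simp
    have "norm (A - B) \<le> 2 * (norm (A - B) / 4)" using le[of "norm (A - B) / 4"] p by simp
    then show False using p by simp
  qed
  then show ?thesis by (simp add: A_def B_def)
qed




definition pp :: "pt \<Rightarrow> complex \<times> real" where "pp p = (zeta p, fst p)"
definition ev :: "nat \<Rightarrow> complex \<times> real" where
  "ev a = (if a = 0 then (0,1) else if a = 2 then (1,0) else if a = 3 then (\<i>,0) else (0,0))"
definition sv :: "nat \<Rightarrow> pt" where
  "sv a = (if a = 0 then (1,0,0,0) else if a = 1 then (0,1,0,0) else if a = 2 then (0,0,1,0)
     else if a = 3 then (0,0,0,1) else 0)"

lemma shift_eq: "shift a t p = p + t *\<^sub>R sv a"
  by (cases p) (auto simp: shift_def sv_def)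

lemma pp_shift: "pp (shift a t p) = pp p + t *\<^sub>R ev a"
  by (cases p) (auto simp: shift_def ev_def pp_def zeta_def complex_eq_iff)

lemma pd_chain:
  assumes "(K has_derivative K') (at (pp p))"
  shows "pd a (\<lambda>q. K (pp q)) p = K' (ev a)"
proof -
  have 1: "((\<lambda>t. pp p + t *\<^sub>R ev a) has_derivative (\<lambda>h. h *\<^sub>R ev a)) (at 0)"
    by (auto intro!: derivative_eq_intros)
  have 2: "(K has_derivative K') (at (pp p + 0 *\<^sub>R ev a))" using assms by simp
  have "((\<lambda>t. K (pp p + t *\<^sub>R ev a)) has_derivative (\<lambda>h. K' (h *\<^sub>R ev a))) (at 0)"
    using has_derivative_compose[OF 1 2] by (simp add: o_def)
  moreover have "(\<lambda>h. K' (h *\<^sub>R ev a)) = (\<lambda>h. h *\<^sub>R K' (ev a))"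
    using assms has_derivative_bounded_linear bounded_linear.linear linear_cmul by blast
  ultimately have "((\<lambda>t. K (pp p + t *\<^sub>R ev a)) has_vector_derivative K' (ev a)) (at 0)"
    unfolding has_vector_derivative_def by simp
  then show ?thesis unfolding pd_def pp_shift by (rule vector_derivative_at)
qed

lemma pd_cong:
  assumes D: "open D" "p \<in> D" and eq: "\<And>q. q \<in> D \<Longrightarrow> A q = B q"
  shows "pd a A p = pd a B p"
proof -
  define T where "T = (\<lambda>t. p + t *\<^sub>R sv a) -` D"
  have T: "open T" unfolding T_def
    by (rule continuous_open_vimage[OF D(1)]) (intro continuous_intros)
  have T0: "0 \<in> T" using D by (simp add: T_def)
  have eqT: "\<And>t. t \<in> T \<Longrightarrow> A (shift a t p) = B (shift a t p)"
    using eq by (simp add: T_def shift_eq)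
  have "((\<lambda>t. A (shift a t p)) has_vector_derivative d) (at 0) \<longleftrightarrow>
        ((\<lambda>t. B (shift a t p)) has_vector_derivative d) (at 0)" for d
    using has_vector_derivative_transform_within_open[OF _ T T0, of "\<lambda>t. A (shift a t p)" d "\<lambda>t. B (shift a t p)"]
      has_vector_derivative_transform_within_open[OF _ T T0, of "\<lambda>t. B (shift a t p)" d "\<lambda>t. A (shift a t p)"]
      eqT by auto
  then show ?thesis unfolding pd_def vector_derivative_def by simp
qed

lemma pd_const: "pd a (\<lambda>q. c) p = 0"
  unfolding pd_def by simp

lemma cont_pp: "continuous (at x) pp"
  unfolding pp_def zeta_def
  by (cases x) (auto simp: Complex_eq split_def intro!: continuous_intros)

lemma hol_D:
  assumes G: "G differentiable (at (z,u))" and Sl: "open Sl" "z \<in> Sl"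
    and eq: "\<And>w. w \<in> Sl \<Longrightarrow> G (w,u) = h w" and h: "(h has_field_derivative d) (at z)"
  shows "Dv G (c,0) (z,u) = c * d"
proof -
  have 1: "((\<lambda>w. (w,u)) has_derivative (\<lambda>h. (h,0))) (at z)"
    by (auto intro!: derivative_eq_intros)
  have 2: "(G has_derivative (\<lambda>h. Dv G h (z,u))) (at (z,u))" using has_Dv[OF G] .
  have a: "((\<lambda>w. G (w,u)) has_derivative (\<lambda>h. Dv G (h,0) (z,u))) (at z)"
    using has_derivative_compose[OF 1 2] by (simp add: o_def)
  have "((\<lambda>w. G (w,u)) has_field_derivative d) (at z)"
    using has_field_derivative_transform_within_open[OF h Sl] eq by auto
  then have b: "((\<lambda>w. G (w,u)) has_derivative (\<lambda>h. d * h)) (at z)"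
    by (simp add: has_field_derivative_def)
  have "(\<lambda>h. Dv G (h,0) (z,u)) = (\<lambda>h. d * h)" using has_derivative_unique[OF a b] .
  then show ?thesis by (metis mult.commute)
qed




locale ppw =
  fixes f :: "complex \<Rightarrow> real \<Rightarrow> complex" and S :: "(complex \<times> real) set"
  assumes S: "open S"
    and sm: "smooth_on_set (\<lambda>(z, u). f z u) S"
    and hol: "\<forall>u. (\<lambda>z. f z u) holomorphic_on {z. (z, u) \<in> S}"
    and nz: "\<forall>(z, u)\<in>S. fzz f z u \<noteq> 0"
begin

definition FF :: "complex \<times> real \<Rightarrow> complex" where "FF = (\<lambda>(z, u). f z u)"
definition DD :: "pt set" where "DD = {p. pp p \<in> S}"

lemma smF: "smooth_on_set FF S" using sm by (simp add: FF_def)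

lemma openDD: "open DD"
  unfolding DD_def using continuous_open_vimage[OF S cont_pp] by (simp add: vimage_def)

lemma slice_open: "open {z. (z, u) \<in> S}"
proof -
  have "open ((\<lambda>z. (z, u)) -` S)" by (rule continuous_open_vimage[OF S]) (intro continuous_intros)
  then show ?thesis by (simp add: vimage_def)
qed

lemma hol_f: "(\<lambda>z. f z u) holomorphic_on {z. (z, u) \<in> S}" using hol by blast
lemma hol_fz: "(\<lambda>z. fz f z u) holomorphic_on {z. (z, u) \<in> S}"
proof -
  have "(\<lambda>z. fz f z u) = deriv (\<lambda>z. f z u)" by (auto simp: fz_def fun_eq_iff)
  then show ?thesis using holomorphic_deriv[OF hol_f slice_open] by simp
qed
lemma hol_fzz: "(\<lambda>z. fzz f z u) holomorphic_on {z. (z, u) \<in> S}"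
proof -
  have "(\<lambda>z. fzz f z u) = deriv (\<lambda>z. fz f z u)" by (auto simp: fzz_def fun_eq_iff)
  then show ?thesis using holomorphic_deriv[OF hol_fz slice_open] by simp
qed

lemma der_gen: "h holomorphic_on {z. (z, u) \<in> S} \<Longrightarrow> (z,u) \<in> S \<Longrightarrow> (h has_field_derivative deriv h z) (at z)"
  using holomorphic_on_imp_differentiable_at[OF _ slice_open] DERIV_deriv_iff_field_differentiable by blast

lemma der_f: "(z,u) \<in> S \<Longrightarrow> ((\<lambda>w. f w u) has_field_derivative fz f z u) (at z)"
  using der_gen[OF hol_f] by (simp add: fz_def)
lemma der_fz: "(z,u) \<in> S \<Longrightarrow> ((\<lambda>w. fz f w u) has_field_derivative fzz f z u) (at z)"
  using der_gen[OF hol_fz] by (simp add: fzz_def)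
lemma der_fzz: "(z,u) \<in> S \<Longrightarrow> ((\<lambda>w. fzz f w u) has_field_derivative fzzz f z u) (at z)"
  using der_gen[OF hol_fzz] by (simp add: fzzz_def)

definition "D2 = Dv FF (ev 2)"
definition "D3 = Dv FF (ev 3)"
definition "D22 = Dv D2 (ev 2)"

lemma smD2: "smooth_on_set D2 S" using smF smooth_D D2_def by metis
lemma smD3: "smooth_on_set D3 S" using smF smooth_D D3_def by metis
lemma smD22: "smooth_on_set D22 S" using smD2 smooth_D D22_def by metis

lemma ev2: "ev 2 = (1, 0)" and ev3: "ev 3 = (\<i>, 0)" by (simp_all add: ev_def)

lemma D2_val: assumes "(z,u) \<in> S" shows "D2 (z,u) = fz f z u"
proof -
  have "Dv FF (1,0) (z,u) = 1 * fz f z u"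
    by (rule hol_D[OF smooth_diff[OF smF assms] slice_open]) (use assms der_f in \<open>auto simp: FF_def\<close>)
  then show ?thesis by (simp add: D2_def ev2)
qed
lemma D3_val: assumes "(z,u) \<in> S" shows "D3 (z,u) = \<i> * fz f z u"
proof -
  have "Dv FF (\<i>,0) (z,u) = \<i> * fz f z u"
    by (rule hol_D[OF smooth_diff[OF smF assms] slice_open]) (use assms der_f in \<open>auto simp: FF_def\<close>)
  then show ?thesis by (simp add: D3_def ev3)
qed
lemma D2_2: assumes "(z,u) \<in> S" shows "Dv D2 (ev 2) (z,u) = fzz f z u"
proof -
  have "Dv D2 (1,0) (z,u) = 1 * fzz f z u"
    by (rule hol_D[OF smooth_diff[OF smD2 assms] slice_open, where h="\<lambda>w. fz f w u"]) (use assms der_fz D2_val in \<open>auto\<close>)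
  then show ?thesis by (simp add: ev2)
qed
lemma D2_3: assumes "(z,u) \<in> S" shows "Dv D2 (ev 3) (z,u) = \<i> * fzz f z u"
proof -
  have "Dv D2 (\<i>,0) (z,u) = \<i> * fzz f z u"
    by (rule hol_D[OF smooth_diff[OF smD2 assms] slice_open, where h="\<lambda>w. fz f w u"]) (use assms der_fz D2_val in \<open>auto\<close>)
  then show ?thesis by (simp add: ev3)
qed
lemma D3_2: assumes "(z,u) \<in> S" shows "Dv D3 (ev 2) (z,u) = \<i> * fzz f z u"
proof -
  have "Dv D3 (1,0) (z,u) = 1 * (\<i> * fzz f z u)"
    by (rule hol_D[OF smooth_diff[OF smD3 assms] slice_open, where h="\<lambda>w. \<i> * fz f w u"])
      (use assms D3_val in \<open>auto intro: DERIV_cmult der_fz\<close>)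
  then show ?thesis by (simp add: ev2)
qed
lemma D3_3: assumes "(z,u) \<in> S" shows "Dv D3 (ev 3) (z,u) = - fzz f z u"
proof -
  have "Dv D3 (\<i>,0) (z,u) = \<i> * (\<i> * fzz f z u)"
    by (rule hol_D[OF smooth_diff[OF smD3 assms] slice_open, where h="\<lambda>w. \<i> * fz f w u"])
      (use assms D3_val in \<open>auto intro: DERIV_cmult der_fz\<close>)
  then show ?thesis by (simp add: ev3)
qed
lemma D22_2: assumes "(z,u) \<in> S" shows "Dv D22 (ev 2) (z,u) = fzzz f z u"
proof -
  have "Dv D22 (1,0) (z,u) = 1 * fzzz f z u"
    by (rule hol_D[OF smooth_diff[OF smD22 assms] slice_open, where h="\<lambda>w. fzz f w u"]) (use assms der_fzz D2_2 in \<open>auto simp: D22_def\<close>)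
  then show ?thesis by (simp add: ev2)
qed
lemma D22_3: assumes "(z,u) \<in> S" shows "Dv D22 (ev 3) (z,u) = \<i> * fzzz f z u"
proof -
  have "Dv D22 (\<i>,0) (z,u) = \<i> * fzzz f z u"
    by (rule hol_D[OF smooth_diff[OF smD22 assms] slice_open, where h="\<lambda>w. fzz f w u"]) (use assms der_fzz D2_2 in \<open>auto simp: D22_def\<close>)
  then show ?thesis by (simp add: ev3)
qed

end



lemma sum4: "(\<Sum>i<4. g i) = g 0 + g 1 + g 2 + g (3::nat)"
  by (simp add: numeral_eq_Suc add_ac)

lemma all4: "(\<forall>a<4. P a) = (P 0 \<and> P 1 \<and> P 2 \<and> P (3::nat))"
proof -
  have "a < 4 \<longleftrightarrow> a = 0 \<or> a = 1 \<or> a = 2 \<or> a = (3::nat)" for a by auto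
  then show ?thesis by auto
qed

lemma pd_ReG:
  assumes "G differentiable (at (pp p))"
  shows "pd b (\<lambda>q. Re (c * G (pp q))) p = Re (c * Dv G (ev b) (pp p))"
proof -
  have "((\<lambda>x. Re (c * G x)) has_derivative (\<lambda>h. Re (c * Dv G h (pp p)))) (at (pp p))"
    using has_Dv[OF assms] by (auto intro!: derivative_eq_intros)
  from pd_chain[OF this] show ?thesis .
qed

lemma pd_CG:
  fixes G :: "complex \<times> real \<Rightarrow> complex"
  assumes "G differentiable (at (pp p))"
  shows "pd b (\<lambda>q. c * G (pp q)) p = c * Dv G (ev b) (pp p)"
proof -
  have "((\<lambda>x. c * G x) has_derivative (\<lambda>h. c * Dv G h (pp p))) (at (pp p))"
    using has_derivative_mult_right[OF has_Dv[OF assms]] by simp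
  from pd_chain[OF this] show ?thesis .
qed

definition coefG :: "nat \<Rightarrow> nat \<Rightarrow> nat \<Rightarrow> real" where
  "coefG a b c = (if a = 1 \<and> b = 0 \<and> c = 0 then 1 else if a = 1 \<and> b = 0 \<and> (c = 2 \<or> c = 3) then 1
     else if a = 1 \<and> c = 0 \<and> (b = 2 \<or> b = 3) then 1 else if (a = 2 \<or> a = 3) \<and> b = 0 \<and> c = 0 then 1/2 else 0)"
definition idxG :: "nat \<Rightarrow> nat \<Rightarrow> nat \<Rightarrow> nat" where
  "idxG a b c = (if a = 1 \<and> b = 0 then c else if a = 1 then b else a)"
definition ginvE :: "real \<Rightarrow> nat \<Rightarrow> nat \<Rightarrow> real" where
  "ginvE h i j = (if (i = 0 \<and> j = 1) \<or> (i = 1 \<and> j = 0) then -1 else if i = 1 \<and> j = 1 then 2 * h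
     else if (i = 2 \<and> j = 2) \<or> (i = 3 \<and> j = 3) then 1/2 else 0)"

lemma ginv_val: "ginv (pp_metric f) p = ginvE (Hfun f p)"
  unfolding ginv_def
proof (rule the_equality)
  show "(\<forall>i j. (4 \<le> i \<or> 4 \<le> j) \<longrightarrow> ginvE (Hfun f p) i j = 0) \<and>
    (\<forall>i<4. \<forall>k<4. (\<Sum>j<4. pp_metric f i j p * ginvE (Hfun f p) j k) = (if i = k then 1 else 0))"
    by (simp add: all4 sum4 ginvE_def pp_metric_def)
next
  fix M assume M: "(\<forall>i j. (4 \<le> i \<or> 4 \<le> j) \<longrightarrow> M i j = 0) \<and>
    (\<forall>i<4. \<forall>k<4. (\<Sum>j<4. pp_metric f i j p * M j k) = (if i = k then 1 else 0))"
  show "M = ginvE (Hfun f p)"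
  proof (intro ext)
    fix i k
    show "M i k = ginvE (Hfun f p) i k"
    proof (cases "i < 4 \<and> k < 4")
      case False
      then show ?thesis using M by (auto simp: ginvE_def)
    next
      case True
      then have k: "k < 4" by simp
      have r: "(\<Sum>j<4. pp_metric f i' j p * M j k) = (if i' = k then 1 else 0)" if "i' < 4" for i'
        using M that k by blast
      have r0: "-2 * Hfun f p * M 0 k - M 1 k = (if 0 = k then 1 else 0)" using r[of 0] by (simp add: sum4 pp_metric_def)
      have r1: "- M 0 k = (if 1 = k then 1 else 0)" using r[of 1] by (simp add: sum4 pp_metric_def)
      have r2: "2 * M 2 k = (if 2 = k then 1 else 0)" using r[of 2] by (simp add: sum4 pp_metric_def)
      have r3: "2 * M 3 k = (if 3 = k then 1 else 0)" using r[of 3] by (simp add: sum4 pp_metric_def)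
      have "i = 0 \<or> i = 1 \<or> i = 2 \<or> i = 3" using True by auto
      moreover have "k = 0 \<or> k = 1 \<or> k = 2 \<or> k = 3" using True by auto
      ultimately show ?thesis using r0 r1 r2 r3 by (auto simp: ginvE_def)
    qed
  qed
qed

context ppw begin

definition Hd :: "nat \<Rightarrow> pt \<Rightarrow> real" where "Hd b p = Re (2 * Dv FF (ev b) (pp p))"
definition Hdd :: "nat \<Rightarrow> nat \<Rightarrow> pt \<Rightarrow> real" where
  "Hdd i e p = Re (2 * Dv (Dv FF (ev i)) (ev e) (pp p))"

lemma Hfun_eq: "Hfun f = (\<lambda>q. Re (2 * FF (pp q)))"
  by (auto simp: fun_eq_iff Hfun_def FF_def pp_def)

lemma diffF: "p \<in> DD \<Longrightarrow> FF differentiable (at (pp p))"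
  using smooth_diff[OF smF] by (simp add: DD_def)
lemma diffDF: "p \<in> DD \<Longrightarrow> Dv FF v differentiable (at (pp p))"
  using smooth_diff[OF smooth_D[OF smF]] by (simp add: DD_def)

lemma pd_H: "p \<in> DD \<Longrightarrow> pd b (Hfun f) p = Hd b p"
  unfolding Hfun_eq Hd_def using pd_ReG[OF diffF] by blast

lemma ev1: "ev 1 = 0" by (simp add: ev_def zero_prod_def)

lemma Hd1: "p \<in> DD \<Longrightarrow> Hd 1 p = 0"
  unfolding Hd_def ev1 using Dv_zero[OF diffF] by simp
lemma Hd1': "p \<in> DD \<Longrightarrow> Hd (Suc 0) p = 0" using Hd1 by simp

lemma pd_metric: "p \<in> DD \<Longrightarrow> pd b (pp_metric f d c) p = (if d = 0 \<and> c = 0 then -2 * Hd b p else 0)"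
proof (cases "d = 0 \<and> c = 0")
  case True
  assume p: "p \<in> DD"
  have "pp_metric f d c = (\<lambda>q. Re ((-4) * FF (pp q)))"
    using True by (auto simp: fun_eq_iff pp_metric_def Hfun_eq)
  then show ?thesis using True pd_ReG[OF diffF[OF p], of b "-4"] by (simp add: Hd_def)
next
  case False
  then have "pp_metric f d c = (\<lambda>q. (if (d = 0 \<and> c = 1) \<or> (d = 1 \<and> c = 0) then -1
     else if (d = 2 \<and> c = 2) \<or> (d = 3 \<and> c = 3) then 2 else 0))"
    by (auto simp: fun_eq_iff pp_metric_def)
  then have "pd b (pp_metric f d c) p = 0" by (simp add: pd_const)
  with False show ?thesis by auto
qed

lemma Gamma_val: assumes p: "p \<in> DD"
  shows "\<forall>a<4. \<forall>b<4. \<forall>c<4. Gamma (pp_metric f) a b c p = coefG a b c * Hd (idxG a b c) p"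
  apply (simp only: all4)
  apply (simp only: Gamma_def sum4 pd_metric[OF p] ginv_val)
  apply (simp add: ginvE_def coefG_def idxG_def Hd1[OF p] Hd1'[OF p])
  done

lemma Gamma_v: "p \<in> DD \<Longrightarrow> a < 4 \<Longrightarrow> b < 4 \<Longrightarrow> c < 4 \<Longrightarrow>
   Gamma (pp_metric f) a b c p = coefG a b c * Hd (idxG a b c) p"
  using Gamma_val by blast

lemma pd_Gamma: assumes p: "p \<in> DD" and abc: "a < 4" "b < 4" "c < 4"
  shows "pd e (Gamma (pp_metric f) a b c) p = coefG a b c * Hdd (idxG a b c) e p"
proof -
  have "pd e (Gamma (pp_metric f) a b c) p =
      pd e (\<lambda>q. Re (of_real (2 * coefG a b c) * Dv FF (ev (idxG a b c)) (pp q))) p"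
    by (rule pd_cong[OF openDD p]) (simp add: Gamma_v abc Hd_def)
  also have "\<dots> = Re (of_real (2 * coefG a b c) * Dv (Dv FF (ev (idxG a b c))) (ev e) (pp p))"
    by (rule pd_ReG[OF diffDF[OF p]])
  also have "\<dots> = coefG a b c * Hdd (idxG a b c) e p" by (simp add: Hdd_def)
  finally show ?thesis .
qed

lemma ppS: "p \<in> DD \<Longrightarrow> (zeta p, fst p) \<in> S" by (simp add: DD_def pp_def)

lemma Hdd_1: "p \<in> DD \<Longrightarrow> Hdd i 1 p = 0"
  unfolding Hdd_def ev1 using Dv_zero[OF diffDF] by simp
lemma Hdd_22: "p \<in> DD \<Longrightarrow> Hdd 2 2 p = 2 * Re (Fzz f p)"
  using D2_2[OF ppS] by (simp add: Hdd_def D2_def pp_def Fzz_def)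
lemma Hdd_23: "p \<in> DD \<Longrightarrow> Hdd 2 3 p = -2 * Im (Fzz f p)"
  using D2_3[OF ppS] by (simp add: Hdd_def D2_def pp_def Fzz_def)
lemma Hdd_32: "p \<in> DD \<Longrightarrow> Hdd 3 2 p = -2 * Im (Fzz f p)"
  using D3_2[OF ppS] by (simp add: Hdd_def D3_def pp_def Fzz_def)
lemma Hdd_33: "p \<in> DD \<Longrightarrow> Hdd 3 3 p = -2 * Re (Fzz f p)"
  using D3_3[OF ppS] by (simp add: Hdd_def D3_def pp_def Fzz_def)
lemma Hdd_sym: "p \<in> DD \<Longrightarrow> Hdd i j p = Hdd j i p"
  unfolding Hdd_def using schwarz[OF S smF, of "pp p"] by (simp add: DD_def)

end



definition RUE :: "real \<Rightarrow> real \<Rightarrow> nat \<Rightarrow> nat \<Rightarrow> nat \<Rightarrow> nat \<Rightarrow> real" where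
  "RUE A B a b c d = (if a = 1 \<and> b = 2 \<and> c = 0 \<and> d = 2 then (-2) * (A)
    else if a = 1 \<and> b = 2 \<and> c = 0 \<and> d = 3 then 2 * (B)
    else if a = 1 \<and> b = 2 \<and> c = 2 \<and> d = 0 then 2 * (A)
    else if a = 1 \<and> b = 2 \<and> c = 3 \<and> d = 0 then (-2) * (B)
    else if a = 1 \<and> b = 3 \<and> c = 0 \<and> d = 2 then 2 * (B)
    else if a = 1 \<and> b = 3 \<and> c = 0 \<and> d = 3 then 2 * (A)
    else if a = 1 \<and> b = 3 \<and> c = 2 \<and> d = 0 then (-2) * (B)
    else if a = 1 \<and> b = 3 \<and> c = 3 \<and> d = 0 then (-2) * (A)
    else if a = 2 \<and> b = 0 \<and> c = 0 \<and> d = 2 then (-1) * (A)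
    else if a = 2 \<and> b = 0 \<and> c = 0 \<and> d = 3 then 1 * (B)
    else if a = 2 \<and> b = 0 \<and> c = 2 \<and> d = 0 then 1 * (A)
    else if a = 2 \<and> b = 0 \<and> c = 3 \<and> d = 0 then (-1) * (B)
    else if a = 3 \<and> b = 0 \<and> c = 0 \<and> d = 2 then 1 * (B)
    else if a = 3 \<and> b = 0 \<and> c = 0 \<and> d = 3 then 1 * (A)
    else if a = 3 \<and> b = 0 \<and> c = 2 \<and> d = 0 then (-1) * (B)
    else if a = 3 \<and> b = 0 \<and> c = 3 \<and> d = 0 then (-1) * (A)
    else 0)"

definition RME :: "real \<Rightarrow> real \<Rightarrow> nat \<Rightarrow> nat \<Rightarrow> nat \<Rightarrow> nat \<Rightarrow> real" where
  "RME A B a b c d = (if a = 0 \<and> b = 2 \<and> c = 0 \<and> d = 2 then 2 * (A)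
    else if a = 0 \<and> b = 2 \<and> c = 0 \<and> d = 3 then (-2) * (B)
    else if a = 0 \<and> b = 2 \<and> c = 2 \<and> d = 0 then (-2) * (A)
    else if a = 0 \<and> b = 2 \<and> c = 3 \<and> d = 0 then 2 * (B)
    else if a = 0 \<and> b = 3 \<and> c = 0 \<and> d = 2 then (-2) * (B)
    else if a = 0 \<and> b = 3 \<and> c = 0 \<and> d = 3 then (-2) * (A)
    else if a = 0 \<and> b = 3 \<and> c = 2 \<and> d = 0 then 2 * (B)
    else if a = 0 \<and> b = 3 \<and> c = 3 \<and> d = 0 then 2 * (A)
    else if a = 2 \<and> b = 0 \<and> c = 0 \<and> d = 2 then (-2) * (A)
    else if a = 2 \<and> b = 0 \<and> c = 0 \<and> d = 3 then 2 * (B)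
    else if a = 2 \<and> b = 0 \<and> c = 2 \<and> d = 0 then 2 * (A)
    else if a = 2 \<and> b = 0 \<and> c = 3 \<and> d = 0 then (-2) * (B)
    else if a = 3 \<and> b = 0 \<and> c = 0 \<and> d = 2 then 2 * (B)
    else if a = 3 \<and> b = 0 \<and> c = 0 \<and> d = 3 then 2 * (A)
    else if a = 3 \<and> b = 0 \<and> c = 2 \<and> d = 0 then (-2) * (B)
    else if a = 3 \<and> b = 0 \<and> c = 3 \<and> d = 0 then (-2) * (A)
    else 0)"

definition W12E :: "real \<Rightarrow> real \<Rightarrow> nat \<Rightarrow> nat \<Rightarrow> nat \<Rightarrow> nat \<Rightarrow> real" where
  "W12E A B a b c d = (if a = 1 \<and> b = 2 \<and> c = 0 \<and> d = 2 then (-1) * (A)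
    else if a = 1 \<and> b = 2 \<and> c = 0 \<and> d = 3 then 1 * (B)
    else if a = 1 \<and> b = 2 \<and> c = 2 \<and> d = 0 then 1 * (A)
    else if a = 1 \<and> b = 2 \<and> c = 3 \<and> d = 0 then (-1) * (B)
    else if a = 1 \<and> b = 3 \<and> c = 0 \<and> d = 2 then 1 * (B)
    else if a = 1 \<and> b = 3 \<and> c = 0 \<and> d = 3 then 1 * (A)
    else if a = 1 \<and> b = 3 \<and> c = 2 \<and> d = 0 then (-1) * (B)
    else if a = 1 \<and> b = 3 \<and> c = 3 \<and> d = 0 then (-1) * (A)
    else if a = 2 \<and> b = 1 \<and> c = 0 \<and> d = 2 then 1 * (A)
    else if a = 2 \<and> b = 1 \<and> c = 0 \<and> d = 3 then (-1) * (B)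
    else if a = 2 \<and> b = 1 \<and> c = 2 \<and> d = 0 then (-1) * (A)
    else if a = 2 \<and> b = 1 \<and> c = 3 \<and> d = 0 then 1 * (B)
    else if a = 3 \<and> b = 1 \<and> c = 0 \<and> d = 2 then (-1) * (B)
    else if a = 3 \<and> b = 1 \<and> c = 0 \<and> d = 3 then (-1) * (A)
    else if a = 3 \<and> b = 1 \<and> c = 2 \<and> d = 0 then 1 * (B)
    else if a = 3 \<and> b = 1 \<and> c = 3 \<and> d = 0 then 1 * (A)
    else 0)"

definition DWE :: "real \<Rightarrow> real \<Rightarrow> nat \<Rightarrow> nat \<Rightarrow> nat \<Rightarrow> nat \<Rightarrow> real" where
  "DWE A B a b c d = (if a = 0 \<and> b = 2 \<and> c = 0 \<and> d = 2 then (-2) * (B)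
    else if a = 0 \<and> b = 2 \<and> c = 0 \<and> d = 3 then (-2) * (A)
    else if a = 0 \<and> b = 2 \<and> c = 2 \<and> d = 0 then 2 * (B)
    else if a = 0 \<and> b = 2 \<and> c = 3 \<and> d = 0 then 2 * (A)
    else if a = 0 \<and> b = 3 \<and> c = 0 \<and> d = 2 then (-2) * (A)
    else if a = 0 \<and> b = 3 \<and> c = 0 \<and> d = 3 then 2 * (B)
    else if a = 0 \<and> b = 3 \<and> c = 2 \<and> d = 0 then 2 * (A)
    else if a = 0 \<and> b = 3 \<and> c = 3 \<and> d = 0 then (-2) * (B)
    else if a = 2 \<and> b = 0 \<and> c = 0 \<and> d = 2 then 2 * (B)
    else if a = 2 \<and> b = 0 \<and> c = 0 \<and> d = 3 then 2 * (A)
    else if a = 2 \<and> b = 0 \<and> c = 2 \<and> d = 0 then (-2) * (B)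
    else if a = 2 \<and> b = 0 \<and> c = 3 \<and> d = 0 then (-2) * (A)
    else if a = 3 \<and> b = 0 \<and> c = 0 \<and> d = 2 then 2 * (A)
    else if a = 3 \<and> b = 0 \<and> c = 0 \<and> d = 3 then (-2) * (B)
    else if a = 3 \<and> b = 0 \<and> c = 2 \<and> d = 0 then (-2) * (A)
    else if a = 3 \<and> b = 0 \<and> c = 3 \<and> d = 0 then 2 * (B)
    else 0)"

definition R24W :: "real \<Rightarrow> real \<Rightarrow> nat \<Rightarrow> nat \<Rightarrow> nat \<Rightarrow> nat \<Rightarrow> real" where
  "R24W A B a b c d = (if a = 0 \<and> b = 2 \<and> c = 0 \<and> d = 2 then (1/2) * (A)
    else if a = 0 \<and> b = 2 \<and> c = 0 \<and> d = 3 then ((-1/2)) * (B)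
    else if a = 0 \<and> b = 2 \<and> c = 2 \<and> d = 1 then 1 * (A)
    else if a = 0 \<and> b = 2 \<and> c = 3 \<and> d = 1 then (-1) * (B)
    else if a = 0 \<and> b = 3 \<and> c = 0 \<and> d = 2 then ((-1/2)) * (B)
    else if a = 0 \<and> b = 3 \<and> c = 0 \<and> d = 3 then ((-1/2)) * (A)
    else if a = 0 \<and> b = 3 \<and> c = 2 \<and> d = 1 then (-1) * (B)
    else if a = 0 \<and> b = 3 \<and> c = 3 \<and> d = 1 then (-1) * (A)
    else if a = 2 \<and> b = 1 \<and> c = 0 \<and> d = 2 then 1 * (A)
    else if a = 2 \<and> b = 1 \<and> c = 0 \<and> d = 3 then (-1) * (B)
    else if a = 2 \<and> b = 1 \<and> c = 2 \<and> d = 1 then 2 * (A)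
    else if a = 2 \<and> b = 1 \<and> c = 3 \<and> d = 1 then (-2) * (B)
    else if a = 3 \<and> b = 1 \<and> c = 0 \<and> d = 2 then (-1) * (B)
    else if a = 3 \<and> b = 1 \<and> c = 0 \<and> d = 3 then (-1) * (A)
    else if a = 3 \<and> b = 1 \<and> c = 2 \<and> d = 1 then (-2) * (B)
    else if a = 3 \<and> b = 1 \<and> c = 3 \<and> d = 1 then (-2) * (A)
    else 0)"

definition R24D :: "real \<Rightarrow> real \<Rightarrow> nat \<Rightarrow> nat \<Rightarrow> nat \<Rightarrow> nat \<Rightarrow> real" where
  "R24D A B a b c d = (if a = 0 \<and> b = 2 \<and> c = 0 \<and> d = 2 then ((-1/2)) * (B)
    else if a = 0 \<and> b = 2 \<and> c = 0 \<and> d = 3 then ((-1/2)) * (A)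
    else if a = 0 \<and> b = 2 \<and> c = 2 \<and> d = 1 then (-1) * (B)
    else if a = 0 \<and> b = 2 \<and> c = 3 \<and> d = 1 then (-1) * (A)
    else if a = 0 \<and> b = 3 \<and> c = 0 \<and> d = 2 then ((-1/2)) * (A)
    else if a = 0 \<and> b = 3 \<and> c = 0 \<and> d = 3 then (1/2) * (B)
    else if a = 0 \<and> b = 3 \<and> c = 2 \<and> d = 1 then (-1) * (A)
    else if a = 0 \<and> b = 3 \<and> c = 3 \<and> d = 1 then 1 * (B)
    else if a = 2 \<and> b = 1 \<and> c = 0 \<and> d = 2 then (-1) * (B)
    else if a = 2 \<and> b = 1 \<and> c = 0 \<and> d = 3 then (-1) * (A)
    else if a = 2 \<and> b = 1 \<and> c = 2 \<and> d = 1 then (-2) * (B)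
    else if a = 2 \<and> b = 1 \<and> c = 3 \<and> d = 1 then (-2) * (A)
    else if a = 3 \<and> b = 1 \<and> c = 0 \<and> d = 2 then (-1) * (A)
    else if a = 3 \<and> b = 1 \<and> c = 0 \<and> d = 3 then 1 * (B)
    else if a = 3 \<and> b = 1 \<and> c = 2 \<and> d = 1 then (-2) * (A)
    else if a = 3 \<and> b = 1 \<and> c = 3 \<and> d = 1 then 2 * (B)
    else 0)"


context ppw begin

lemma Hdd_1': "p \<in> DD \<Longrightarrow> Hdd i (Suc 0) p = 0" using Hdd_1 by simp
lemma Hdd_20: "p \<in> DD \<Longrightarrow> Hdd 2 0 p = Hdd 0 2 p" using Hdd_sym by blast
lemma Hdd_30: "p \<in> DD \<Longrightarrow> Hdd 3 0 p = Hdd 0 3 p" using Hdd_sym by blast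

lemma RiemU_val: assumes p: "p \<in> DD"
  shows "\<forall>a<4. \<forall>b<4. \<forall>c<4. \<forall>d<4. RiemU (pp_metric f) a b c d p = RUE (Re (Fzz f p)) (Im (Fzz f p)) a b c d"
  apply (simp only: all4)
  apply (simp add: RiemU_def sum4 pd_Gamma[OF p] Gamma_v[OF p])
  apply (simp add: coefG_def idxG_def Hdd_22[OF p] Hdd_23[OF p] Hdd_32[OF p] Hdd_33[OF p] Hdd_1[OF p] Hdd_1'[OF p]
     Hdd_20[OF p] Hdd_30[OF p] RUE_def algebra_simps)
  done

end


context ppw begin

lemma RiemU_v: "p \<in> DD \<Longrightarrow> a < 4 \<Longrightarrow> b < 4 \<Longrightarrow> c < 4 \<Longrightarrow> d < 4 \<Longrightarrow>
   RiemU (pp_metric f) a b c d p = RUE (Re (Fzz f p)) (Im (Fzz f p)) a b c d"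
  using RiemU_val by blast

lemma Riem_val: assumes p: "p \<in> DD"
  shows "\<forall>a<4. \<forall>b<4. \<forall>c<4. \<forall>d<4. Riem (pp_metric f) a b c d p = RME (Re (Fzz f p)) (Im (Fzz f p)) a b c d"
  apply (simp only: all4)
  apply (simp add: Riem_def sum4 RiemU_v[OF p])
  apply (simp add: pp_metric_def RUE_def RME_def)
  done

lemma Ric_val: assumes p: "p \<in> DD"
  shows "\<forall>b<4. \<forall>d<4. Ric (pp_metric f) b d p = 0"
  apply (simp only: all4)
  apply (simp add: Ric_def sum4 RiemU_v[OF p])
  apply (simp add: RUE_def)
  done

lemma Ric_v: "p \<in> DD \<Longrightarrow> b < 4 \<Longrightarrow> d < 4 \<Longrightarrow> Ric (pp_metric f) b d p = 0"
  using Ric_val by blast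

lemma Scal_v: "p \<in> DD \<Longrightarrow> Scal (pp_metric f) p = 0"
  by (simp add: Scal_def sum4 Ric_v)

lemma Weyl_v: "p \<in> DD \<Longrightarrow> a < 4 \<Longrightarrow> b < 4 \<Longrightarrow> c < 4 \<Longrightarrow> d < 4 \<Longrightarrow>
   Weyl (pp_metric f) a b c d p = RME (Re (Fzz f p)) (Im (Fzz f p)) a b c d"
  using Riem_val by (simp add: Weyl_def Ric_v Scal_v)

lemma raise12_val: assumes p: "p \<in> DD"
  shows "\<forall>a<4. \<forall>b<4. \<forall>c<4. \<forall>d<4. raise12 (pp_metric f) (Weyl (pp_metric f)) a b c d p = W12E (Re (Fzz f p)) (Im (Fzz f p)) a b c d"
  apply (simp only: all4)
  apply (simp add: raise12_def sum4 Weyl_v[OF p] ginv_val)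
  apply (simp add: ginvE_def RME_def W12E_def)
  done

lemma det_v: "det4 (\<lambda>i j. pp_metric f i j p) = -4"
  by (simp add: det4_def sum4 lc_def pp_metric_def)

end


context ppw begin

lemma raise12_v: "p \<in> DD \<Longrightarrow> a < 4 \<Longrightarrow> b < 4 \<Longrightarrow> c < 4 \<Longrightarrow> d < 4 \<Longrightarrow>
   raise12 (pp_metric f) (Weyl (pp_metric f)) a b c d p = W12E (Re (Fzz f p)) (Im (Fzz f p)) a b c d"
  using raise12_val by blast

lemma eta_v: "eta (pp_metric f) a b c d p = 2 * lc a b c d"
  by (simp add: eta_def det_v)

lemma dual_val: assumes p: "p \<in> DD"
  shows "\<forall>a<4. \<forall>b<4. \<forall>c<4. \<forall>d<4. dualWeyl (pp_metric f) a b c d p = DWE (Re (Fzz f p)) (Im (Fzz f p)) a b c d"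
  apply (simp only: all4)
  apply (simp add: dualWeyl_def sum4 raise12_v[OF p] eta_v)
  apply (simp add: W12E_def DWE_def lc_def)
  done

lemma dual_v: "p \<in> DD \<Longrightarrow> a < 4 \<Longrightarrow> b < 4 \<Longrightarrow> c < 4 \<Longrightarrow> d < 4 \<Longrightarrow>
   dualWeyl (pp_metric f) a b c d p = DWE (Re (Fzz f p)) (Im (Fzz f p)) a b c d"
  using dual_val by blast

lemma Cdag_val: assumes p: "p \<in> DD"
  shows "\<forall>a<4. \<forall>b<4. \<forall>c<4. \<forall>d<4. Cdag (pp_metric f) a b c d p = 2 * Fzz f p * (wedge1 du dzeta a b * wedge1 du dzeta c d)"
  apply (simp only: all4)
  apply (simp add: Cdag_def Weyl_v[OF p] dual_v[OF p])
  apply (simp add: RME_def DWE_def wedge1_def du_def dzeta_def complex_eq_iff)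
  done

lemma R24W_val: assumes p: "p \<in> DD"
  shows "\<forall>a<4. \<forall>b<4. \<forall>c<4. \<forall>d<4. raise24 (pp_metric f) (Weyl (pp_metric f)) a b c d p = R24W (Re (Fzz f p)) (Im (Fzz f p)) a b c d"
  apply (simp only: all4)
  apply (simp add: raise24_def sum4 Weyl_v[OF p] ginv_val)
  apply (simp add: ginvE_def RME_def R24W_def)
  done

lemma R24D_val: assumes p: "p \<in> DD"
  shows "\<forall>a<4. \<forall>b<4. \<forall>c<4. \<forall>d<4. raise24 (pp_metric f) (dualWeyl (pp_metric f)) a b c d p = R24D (Re (Fzz f p)) (Im (Fzz f p)) a b c d"
  apply (simp only: all4)
  apply (simp add: raise24_def sum4 dual_v[OF p] ginv_val)
  apply (simp add: ginvE_def DWE_def R24D_def)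
  done

end


context ppw begin

lemma Weyl_v': "p \<in> DD \<Longrightarrow> a < 4 \<Longrightarrow> b < 4 \<Longrightarrow> c < 4 \<Longrightarrow> d < 4 \<Longrightarrow>
   Weyl (pp_metric f) a b c d p = RME (Re (Fzz f p)) (Im (Fzz f p)) a b c d" using Weyl_v by blast
lemma R24W_v: "p \<in> DD \<Longrightarrow> a < 4 \<Longrightarrow> b < 4 \<Longrightarrow> c < 4 \<Longrightarrow> d < 4 \<Longrightarrow>
   raise24 (pp_metric f) (Weyl (pp_metric f)) a b c d p = R24W (Re (Fzz f p)) (Im (Fzz f p)) a b c d"
  using R24W_val by blast
lemma R24D_v: "p \<in> DD \<Longrightarrow> a < 4 \<Longrightarrow> b < 4 \<Longrightarrow> c < 4 \<Longrightarrow> d < 4 \<Longrightarrow>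
   raise24 (pp_metric f) (dualWeyl (pp_metric f)) a b c d p = R24D (Re (Fzz f p)) (Im (Fzz f p)) a b c d"
  using R24D_val by blast
lemma Cdag_v: "p \<in> DD \<Longrightarrow> a < 4 \<Longrightarrow> b < 4 \<Longrightarrow> c < 4 \<Longrightarrow> d < 4 \<Longrightarrow>
   Cdag (pp_metric f) a b c d p = 2 * Fzz f p * (wedge1 du dzeta a b * wedge1 du dzeta c d)"
  using Cdag_val by blast

lemma BR_val: assumes p: "p \<in> DD"
  shows "\<forall>a<4. \<forall>b<4. \<forall>c<4. \<forall>d<4. BelRobinson (pp_metric f) a b c d p = 4 * (cmod (Fzz f p))\<^sup>2 * (duR a * duR b * duR c * duR d)"
  apply (simp only: all4)
  apply (simp add: BelRobinson_def sum4 Weyl_v'[OF p] dual_v[OF p] R24W_v[OF p] R24D_v[OF p])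
  apply (simp add: RME_def DWE_def R24W_def R24D_def duR_def cmod_power2 algebra_simps)
  apply (simp_all add: power2_eq_square algebra_simps)
  done

lemma BR_v: "p \<in> DD \<Longrightarrow> a < 4 \<Longrightarrow> b < 4 \<Longrightarrow> c < 4 \<Longrightarrow> d < 4 \<Longrightarrow>
   BelRobinson (pp_metric f) a b c d p = 4 * (cmod (Fzz f p))\<^sup>2 * (duR a * duR b * duR c * duR d)"
  using BR_val by blast

lemma Fzz_D22: "q \<in> DD \<Longrightarrow> Fzz f q = D22 (pp q)"
  using D2_2[OF ppS] by (simp add: Fzz_def D22_def pp_def)

lemma Fzz_nz: "p \<in> DD \<Longrightarrow> Fzz f p \<noteq> 0"
  using nz ppS by (fastforce simp: Fzz_def)

lemma pdFzz: assumes p: "p \<in> DD" shows "pd e (Fzz f) p = Dv D22 (ev e) (pp p)"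
proof -
  have "pd e (Fzz f) p = pd e (\<lambda>q. 1 * D22 (pp q)) p"
    by (rule pd_cong[OF openDD p]) (simp add: Fzz_D22)
  also have "\<dots> = 1 * Dv D22 (ev e) (pp p)"
    by (rule pd_CG) (use smooth_diff[OF smD22] p in \<open>simp add: DD_def\<close>)
  finally show ?thesis by simp
qed

lemma diffD22: "p \<in> DD \<Longrightarrow> D22 differentiable (at (pp p))"
  using smooth_diff[OF smD22] by (simp add: DD_def)

lemma pdFzz_1: assumes p: "p \<in> DD" shows "pd 1 (Fzz f) p = 0"
proof -
  have "pd 1 (Fzz f) p = Dv D22 (ev 1) (pp p)" using pdFzz[OF p] .
  also have "\<dots> = 0" by (simp only: ev1 Dv_zero[OF diffD22[OF p]])
  finally show ?thesis .
qed
lemma pdFzz_2: "p \<in> DD \<Longrightarrow> pd 2 (Fzz f) p = Fzzz f p"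
  using pdFzz D22_2[OF ppS] by (simp add: pp_def Fzzz_def)
lemma pdFzz_3: "p \<in> DD \<Longrightarrow> pd 3 (Fzz f) p = \<i> * Fzzz f p"
  using pdFzz D22_3[OF ppS] by (simp add: pp_def Fzzz_def)

lemma Kform_eq: assumes p: "p \<in> DD" and e: "e < 4"
  shows "Kform f e p = pd e (Fzz f) p / Fzz f p"
proof -
  have "e = 0 \<or> e = 1 \<or> e = 2 \<or> e = 3" using e by auto
  then show ?thesis
    using pdFzz_1[OF p] pdFzz_2[OF p] pdFzz_3[OF p]
    by (auto simp: Kform_def du_def dzeta_def mult.commute)
qed

lemma pd_Cdag: assumes p: "p \<in> DD" and abcd: "a < 4" "b < 4" "c < 4" "d < 4"
  shows "pd e (Cdag (pp_metric f) a b c d) p = 2 * (wedge1 du dzeta a b * wedge1 du dzeta c d) * pd e (Fzz f) p"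
proof -
  have "pd e (Cdag (pp_metric f) a b c d) p = pd e (\<lambda>q. (2 * (wedge1 du dzeta a b * wedge1 du dzeta c d)) * D22 (pp q)) p"
    by (rule pd_cong[OF openDD p]) (simp add: Cdag_v abcd Fzz_D22)
  also have "\<dots> = 2 * (wedge1 du dzeta a b * wedge1 du dzeta c d) * Dv D22 (ev e) (pp p)"
    by (rule pd_CG[OF diffD22[OF p]])
  finally show ?thesis using pdFzz[OF p] by simp
qed

lemma Sab: assumes p: "p \<in> DD"
  shows "\<forall>e<4. \<forall>a<4. \<forall>b<4. (\<Sum>k<4. complex_of_real (Gamma (pp_metric f) k e a p) * wedge1 du dzeta k b
     + complex_of_real (Gamma (pp_metric f) k e b p) * wedge1 du dzeta a k) = 0"
  apply (simp only: all4)
  apply (simp add: sum4 Gamma_v[OF p])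
  apply (simp add: coefG_def idxG_def wedge1_def du_def dzeta_def)
  done

lemma covD4_v: assumes p: "p \<in> DD" and idx: "e < 4" "a < 4" "b < 4" "c < 4" "d < 4"
  shows "covD4 (pp_metric f) (Cdag (pp_metric f)) e a b c d p = Kform f e p * Cdag (pp_metric f) a b c d p"
proof -
  let ?G = "\<lambda>x y z. complex_of_real (Gamma (pp_metric f) x y z p)"
  let ?w = "wedge1 du dzeta"
  let ?F = "Fzz f p"
  have "(\<Sum>k<4. ?G k e a * Cdag (pp_metric f) k b c d p + ?G k e b * Cdag (pp_metric f) a k c d p
          + ?G k e c * Cdag (pp_metric f) a b k d p + ?G k e d * Cdag (pp_metric f) a b c k p)
      = (\<Sum>k<4. 2 * ?F * ?w c d * (?G k e a * ?w k b + ?G k e b * ?w a k)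
          + 2 * ?F * ?w a b * (?G k e c * ?w k d + ?G k e d * ?w c k))"
    by (rule sum.cong) (auto simp: Cdag_v[OF p] idx algebra_simps)
  also have "\<dots> = 2 * ?F * ?w c d * (\<Sum>k<4. ?G k e a * ?w k b + ?G k e b * ?w a k)
          + 2 * ?F * ?w a b * (\<Sum>k<4. ?G k e c * ?w k d + ?G k e d * ?w c k)"
    by (simp add: sum4 algebra_simps)
  also have "\<dots> = 0" using Sab[OF p] idx by simp
  finally have s0: "(\<Sum>k<4. ?G k e a * Cdag (pp_metric f) k b c d p + ?G k e b * Cdag (pp_metric f) a k c d p
          + ?G k e c * Cdag (pp_metric f) a b k d p + ?G k e d * Cdag (pp_metric f) a b c k p) = 0" .
  have "covD4 (pp_metric f) (Cdag (pp_metric f)) e a b c d p = 2 * (?w a b * ?w c d) * pd e (Fzz f) p"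
    unfolding covD4_def using s0 pd_Cdag[OF p idx(2-5)] by simp
  also have "\<dots> = Kform f e p * Cdag (pp_metric f) a b c d p"
    using Kform_eq[OF p idx(1)] Cdag_v[OF p idx(2-5)] Fzz_nz[OF p] by (simp add: field_simps)
  finally show ?thesis .
qed

lemma normK_v: assumes p: "p \<in> DD"
  shows "normK (pp_metric f) (Kform f) p = complex_of_real ((cmod (Fzzz f p / Fzz f p))\<^sup>2)"
proof -
  have "normK (pp_metric f) (Kform f) p = cnj (Fzzz f p / Fzz f p) * (Fzzz f p / Fzz f p)"
    using Fzz_nz[OF p]
    by (simp add: normK_def sum4 ginv_val ginvE_def Kform_def du_def dzeta_def field_simps)
  also have "\<dots> = complex_of_real ((cmod (Fzzz f p / Fzz f p))\<^sup>2)"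
    by (simp only: complex_norm_square) (rule mult.commute)
  finally show ?thesis .
qed

lemma wedge_iff: assumes p: "p \<in> DD"
  shows "(Fzzz f p = 0) = (\<forall>c1<4. \<forall>c2<4. \<forall>c3<4. \<forall>a<4. \<forall>b<4.
              wedgeTK (BelRobinson (pp_metric f)) (Kform f) c1 c2 c3 a b p = 0)"
proof
  assume z: "Fzzz f p = 0"
  show "\<forall>c1<4. \<forall>c2<4. \<forall>c3<4. \<forall>a<4. \<forall>b<4. wedgeTK (BelRobinson (pp_metric f)) (Kform f) c1 c2 c3 a b p = 0"
  proof (intro allI impI)
    fix c1 c2 c3 a b :: nat
    assume "c1 < 4" "c2 < 4" "c3 < 4" "a < 4" "b < 4"
    then show "wedgeTK (BelRobinson (pp_metric f)) (Kform f) c1 c2 c3 a b p = 0"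
      using z by (simp add: wedgeTK_def BR_v[OF p] Kform_def duR_def du_def)
  qed
next
  assume w: "\<forall>c1<4. \<forall>c2<4. \<forall>c3<4. \<forall>a<4. \<forall>b<4. wedgeTK (BelRobinson (pp_metric f)) (Kform f) c1 c2 c3 a b p = 0"
  then have "wedgeTK (BelRobinson (pp_metric f)) (Kform f) 0 0 0 0 2 p = 0" by simp
  then have "complex_of_real (4 * (cmod (Fzz f p))\<^sup>2) * (Fzzz f p / Fzz f p) = 0"
    by (simp add: wedgeTK_def BR_v[OF p] Kform_def duR_def du_def dzeta_def)
  then show "Fzzz f p = 0" using Fzz_nz[OF p] by simp
qed

end

theorem mainTheorem3:
  fixes f :: "complex \<Rightarrow> real \<Rightarrow> complex" and S :: "(complex \<times> real) set"
  assumes "open S"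
    and "smooth_on_set (\<lambda>(z, u). f z u) S"
    and "\<forall>u. (\<lambda>z. f z u) holomorphic_on {z. (z, u) \<in> S}"
    and "\<forall>(z, u)\<in>S. fzz f z u \<noteq> 0"
  defines "D \<equiv> {p. (zeta p, fst p) \<in> S}"
  shows
    "(\<exists>k::complex. k \<noteq> 0 \<and> (\<forall>p\<in>D. \<forall>a<4. \<forall>b<4. \<forall>c<4. \<forall>d<4.
        Cdag (pp_metric f) a b c d p = k * Fzz f p * (wedge1 du dzeta a b * wedge1 du dzeta c d)))
   \<and> (\<forall>p\<in>D. \<forall>e<4. \<forall>a<4. \<forall>b<4. \<forall>c<4. \<forall>d<4.
        covD4 (pp_metric f) (Cdag (pp_metric f)) e a b c d p = Kform f e p * Cdag (pp_metric f) a b c d p)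
   \<and> (\<forall>p\<in>D. \<forall>e<4. Kform f e p = pd e (Fzz f) p / Fzz f p)
   \<and> (\<exists>\<kappa>::real. \<kappa> > 0 \<and> (\<forall>p\<in>D. \<forall>a<4. \<forall>b<4. \<forall>c<4. \<forall>d<4.
        BelRobinson (pp_metric f) a b c d p = \<kappa> * (cmod (Fzz f p))\<^sup>2 * (duR a * duR b * duR c * duR d)))
   \<and> (\<forall>p\<in>D. normK (pp_metric f) (Kform f) p = complex_of_real ((cmod (Fzzz f p / Fzz f p))\<^sup>2))
   \<and> (\<forall>p\<in>D. (normK (pp_metric f) (Kform f) p = 0 \<longleftrightarrow> Fzzz f p = 0)
        \<and> (Fzzz f p = 0 \<longleftrightarrow> (\<forall>c1<4. \<forall>c2<4. \<forall>c3<4. \<forall>a<4. \<forall>b<4.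
              wedgeTK (BelRobinson (pp_metric f)) (Kform f) c1 c2 c3 a b p = 0)))"
proof -
  interpret ppw f S using assms(1-4) by unfold_locales
  have DD: "D = DD" using assms(5) by (simp add: DD_def pp_def)
  have c1: "\<exists>k::complex. k \<noteq> 0 \<and> (\<forall>p\<in>DD. \<forall>a<4. \<forall>b<4. \<forall>c<4. \<forall>d<4.
        Cdag (pp_metric f) a b c d p = k * Fzz f p * (wedge1 du dzeta a b * wedge1 du dzeta c d))"
    by (rule exI[of _ 2]) (simp add: Cdag_v)
  have c4: "\<exists>\<kappa>::real. \<kappa> > 0 \<and> (\<forall>p\<in>DD. \<forall>a<4. \<forall>b<4. \<forall>c<4. \<forall>d<4.
        BelRobinson (pp_metric f) a b c d p = \<kappa> * (cmod (Fzz f p))\<^sup>2 * (duR a * duR b * duR c * duR d))"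
    by (rule exI[of _ 4]) (simp add: BR_v)
  have c6: "normK (pp_metric f) (Kform f) p = 0 \<longleftrightarrow> Fzzz f p = 0" if p: "p \<in> DD" for p
    using normK_v[OF p] Fzz_nz[OF p] by simp
  show ?thesis unfolding DD
  proof (intro conjI)
    show "\<exists>k::complex. k \<noteq> 0 \<and> (\<forall>p\<in>DD. \<forall>a<4. \<forall>b<4. \<forall>c<4. \<forall>d<4.
        Cdag (pp_metric f) a b c d p = k * Fzz f p * (wedge1 du dzeta a b * wedge1 du dzeta c d))" by (rule c1)
    show "\<forall>p\<in>DD. \<forall>e<4. \<forall>a<4. \<forall>b<4. \<forall>c<4. \<forall>d<4.
        covD4 (pp_metric f) (Cdag (pp_metric f)) e a b c d p = Kform f e p * Cdag (pp_metric f) a b c d p"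
      using covD4_v by blast
    show "\<forall>p\<in>DD. \<forall>e<4. Kform f e p = pd e (Fzz f) p / Fzz f p" using Kform_eq by blast
    show "\<exists>\<kappa>::real. \<kappa> > 0 \<and> (\<forall>p\<in>DD. \<forall>a<4. \<forall>b<4. \<forall>c<4. \<forall>d<4.
        BelRobinson (pp_metric f) a b c d p = \<kappa> * (cmod (Fzz f p))\<^sup>2 * (duR a * duR b * duR c * duR d))" by (rule c4)
    show "\<forall>p\<in>DD. normK (pp_metric f) (Kform f) p = complex_of_real ((cmod (Fzzz f p / Fzz f p))\<^sup>2)"
      using normK_v by blast
    show "\<forall>p\<in>DD. (normK (pp_metric f) (Kform f) p = 0 \<longleftrightarrow> Fzzz f p = 0)
        \<and> (Fzzz f p = 0 \<longleftrightarrow> (\<forall>c1<4. \<forall>c2<4. \<forall>c3<4. \<forall>a<4. \<forall>b<4.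
              wedgeTK (BelRobinson (pp_metric f)) (Kform f) c1 c2 c3 a b p = 0))"
      using c6 wedge_iff by blast
  qed
qed

end
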